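(* Let $\dot G$ be a connected, non-complete, $5$-regular and $3$ net-regular SRSG belonging to $\mathcal C_1\cup\mathcal C_4\cup\mathcal C_5$ that contains no unbalanced triangle. Then $\dot G$ is isomorphic to $\dot S^2_{10}$ (parameters $(10,5,0,0,1)$) or to $\dot S^3_{10}$ (parameters $(10,5,3,0,-2)$).
   Context: A signed graph $\dot G=(G,\sigma)$ is a simple graph $G$ with $\sigma:E(G)\to\{\pm1\}$; adjacency matrix $A_{\dot G}$ has entries $\sigma(v_iv_j)$ for adjacent vertices, $0$ otherwise. Degree and connectedness refer to $G$; net-degree is $d^+(v)-d^-(v)$ (numbers of positive minus negative incident edges); $\rho$ net-regular means all net-degrees equal $\rho$. A triangle is unbalanced if the product of its edge signs is $-1$. $\dot G$ on $n$ vertices is an SRSG if it is neither homogeneous (all edges of one sign) complete nor edgeless and there are $r\in\mathbb N$, $a,b,c\in\mathbb Z$ with $(A^2_{\dot G})_{ii}=r$, $(A^2_{\dot G})_{ij}=a$ for positive edges, $b$ for negative edges, $c$ for distinct non-adjacent pairs; parameters $(n,r,a,b,c)$. Classes of inhomogeneous SRSGs: $\mathcal C_1$: $a=-b$ and (complete, or non-complete with $c\ne0$); $\mathcal C_4$: $a\ne-b$, non-complete, $c=0$; $\mathcal C_5$: $a\neq -b$, non-complete, $c\notin\{0,\frac{a+b}2\}$. $\dot S^2_{10}$ is $K_{5,5}$ with the edges of a perfect matching negative and all other edges positive. $\dot S^3_{10}$ is the union of two vertex-disjoint all-positive copies of $K_5$ on $\{u_1,\dots,u_5\}$ and $\{w_1,\dots,w_5\}$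 together with negative edges $u_tw_t$, $t=1,\dots,5$. *)

theory Defs
  imports Main
begin

text \<open>A signed graph on a finite vertex set V is encoded by its signed adjacency
  function s, i.e. s u v is the (u,v) entry of the adjacency matrix:
  s u v = 1 for a positive edge, -1 for a negative edge, 0 for a non-edge.\<close>

definition signed_graph :: "'a set \<Rightarrow> ('a \<Rightarrow> 'a \<Rightarrow> int) \<Rightarrow> bool" where
  "signed_graph V s \<longleftrightarrow> finite V \<and> (\<forall>u v. s u v = s v u) \<and> (\<forall>u. s u u = 0)
     \<and> (\<forall>u v. s u v \<in> {-1, 0, 1}) \<and> (\<forall>u v. u \<notin> V \<or> v \<notin> V \<longrightarrow> s u v = 0)"

definition adj :: "('a \<Rightarrow> 'a \<Rightarrow> int) \<Rightarrow> 'a \<Rightarrow> 'a \<Rightarrow> bool" where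
  "adj s u v \<longleftrightarrow> s u v \<noteq> 0"

definition A2 :: "'a set \<Rightarrow> ('a \<Rightarrow> 'a \<Rightarrow> int) \<Rightarrow> 'a \<Rightarrow> 'a \<Rightarrow> int" where
  "A2 V s u v = (\<Sum>w\<in>V. s u w * s w v)"

definition sg_complete :: "'a set \<Rightarrow> ('a \<Rightarrow> 'a \<Rightarrow> int) \<Rightarrow> bool" where
  "sg_complete V s \<longleftrightarrow> (\<forall>u\<in>V. \<forall>v\<in>V. u \<noteq> v \<longrightarrow> adj s u v)"

definition sg_edgeless :: "'a set \<Rightarrow> ('a \<Rightarrow> 'a \<Rightarrow> int) \<Rightarrow> bool" where
  "sg_edgeless V s \<longleftrightarrow> (\<forall>u\<in>V. \<forall>v\<in>V. \<not> adj s u v)"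

definition sg_homogeneous :: "'a set \<Rightarrow> ('a \<Rightarrow> 'a \<Rightarrow> int) \<Rightarrow> bool" where
  "sg_homogeneous V s \<longleftrightarrow> (\<forall>u\<in>V. \<forall>v\<in>V. s u v \<ge> 0) \<or> (\<forall>u\<in>V. \<forall>v\<in>V. s u v \<le> 0)"

definition degree :: "'a set \<Rightarrow> ('a \<Rightarrow> 'a \<Rightarrow> int) \<Rightarrow> 'a \<Rightarrow> nat" where
  "degree V s v = card {w\<in>V. adj s v w}"

definition net_degree :: "'a set \<Rightarrow> ('a \<Rightarrow> 'a \<Rightarrow> int) \<Rightarrow> 'a \<Rightarrow> int" where
  "net_degree V s v = int (card {w\<in>V. s v w = 1}) - int (card {w\<in>V. s v w = -1})"

definition regular :: "'a set \<Rightarrow> ('a \<Rightarrow> 'a \<Rightarrow> int) \<Rightarrow> nat \<Rightarrow> bool" where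
  "regular V s k \<longleftrightarrow> (\<forall>v\<in>V. degree V s v = k)"

definition net_regular :: "'a set \<Rightarrow> ('a \<Rightarrow> 'a \<Rightarrow> int) \<Rightarrow> int \<Rightarrow> bool" where
  "net_regular V s \<rho> \<longleftrightarrow> (\<forall>v\<in>V. net_degree V s v = \<rho>)"

definition sg_connected :: "'a set \<Rightarrow> ('a \<Rightarrow> 'a \<Rightarrow> int) \<Rightarrow> bool" where
  "sg_connected V s \<longleftrightarrow> (\<forall>u\<in>V. \<forall>v\<in>V. (\<lambda>x y. x \<in> V \<and> y \<in> V \<and> adj s x y)\<^sup>*\<^sup>* u v)"

definition has_unbalanced_triangle :: "'a set \<Rightarrow> ('a \<Rightarrow> 'a \<Rightarrow> int) \<Rightarrow> bool" where
  "has_unbalanced_triangle V s \<longleftrightarrow> (\<exists>u\<in>V. \<exists>v\<in>V. \<exists>w\<in>V.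
      adj s u v \<and> adj s v w \<and> adj s u w \<and> s u v * s v w * s u w = -1)"

definition SRSG :: "'a set \<Rightarrow> ('a \<Rightarrow> 'a \<Rightarrow> int) \<Rightarrow> nat \<Rightarrow> nat \<Rightarrow> int \<Rightarrow> int \<Rightarrow> int \<Rightarrow> bool" where
  "SRSG V s n r a b c \<longleftrightarrow> signed_graph V s \<and> card V = n
     \<and> \<not> (sg_homogeneous V s \<and> sg_complete V s) \<and> \<not> sg_edgeless V s
     \<and> (\<forall>i\<in>V. A2 V s i i = int r)
     \<and> (\<forall>i\<in>V. \<forall>j\<in>V. i \<noteq> j \<longrightarrow> s i j = 1 \<longrightarrow> A2 V s i j = a)
     \<and> (\<forall>i\<in>V. \<forall>j\<in>V. i \<noteq> j \<longrightarrow> s i j = -1 \<longrightarrow> A2 V s i j = b)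
     \<and> (\<forall>i\<in>V. \<forall>j\<in>V. i \<noteq> j \<longrightarrow> s i j = 0 \<longrightarrow> A2 V s i j = c)"

definition inhomogeneous :: "'a set \<Rightarrow> ('a \<Rightarrow> 'a \<Rightarrow> int) \<Rightarrow> bool" where
  "inhomogeneous V s \<longleftrightarrow> \<not> sg_homogeneous V s"

definition class_C1 :: "'a set \<Rightarrow> ('a \<Rightarrow> 'a \<Rightarrow> int) \<Rightarrow> int \<Rightarrow> int \<Rightarrow> int \<Rightarrow> bool" where
  "class_C1 V s a b c \<longleftrightarrow> inhomogeneous V s \<and> a = - b
     \<and> (sg_complete V s \<or> (\<not> sg_complete V s \<and> c \<noteq> 0))"

definition class_C4 :: "'a set \<Rightarrow> ('a \<Rightarrow> 'a \<Rightarrow> int) \<Rightarrow> int \<Rightarrow> int \<Rightarrow> int \<Rightarrow> bool" where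
  "class_C4 V s a b c \<longleftrightarrow> inhomogeneous V s \<and> a \<noteq> - b \<and> \<not> sg_complete V s \<and> c = 0"

definition class_C5 :: "'a set \<Rightarrow> ('a \<Rightarrow> 'a \<Rightarrow> int) \<Rightarrow> int \<Rightarrow> int \<Rightarrow> int \<Rightarrow> bool" where
  "class_C5 V s a b c \<longleftrightarrow> inhomogeneous V s \<and> a \<noteq> - b \<and> \<not> sg_complete V s
     \<and> c \<noteq> 0 \<and> 2 * c \<noteq> a + b"

definition sg_isomorphic :: "'a set \<Rightarrow> ('a \<Rightarrow> 'a \<Rightarrow> int) \<Rightarrow> 'b set \<Rightarrow> ('b \<Rightarrow> 'b \<Rightarrow> int) \<Rightarrow> bool" where
  "sg_isomorphic V s W t \<longleftrightarrow> (\<exists>f. bij_betw f V W \<and> (\<forall>u\<in>V. \<forall>v\<in>V. t (f u) (f v) = s u v))"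

text \<open>Vertices 0..4 are u_1..u_5, vertices 5..9 are w_1..w_5 (u_t = t-1, w_t = t+4).\<close>
definition V10 :: "nat set" where "V10 = {0..<10}"

definition S2_10 :: "nat \<Rightarrow> nat \<Rightarrow> int" where
  "S2_10 i j = (if i \<in> V10 \<and> j \<in> V10 \<and> (i < 5 \<longleftrightarrow> \<not> j < 5)
      then (if i = j + 5 \<or> j = i + 5 then -1 else 1) else 0)"

definition S3_10 :: "nat \<Rightarrow> nat \<Rightarrow> int" where
  "S3_10 i j = (if i \<in> V10 \<and> j \<in> V10 \<and> i \<noteq> j
      then (if (i < 5 \<longleftrightarrow> j < 5) then 1 else if i = j + 5 \<or> j = i + 5 then -1 else 0)
      else 0)"

end

theory Submission
  imports Defs
begin


lemma sum_all1:
  fixes f :: "'b \<Rightarrow> int"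
  assumes "finite R" "\<And>w. w\<in>R \<Longrightarrow> f w \<le> 1" "(\<Sum>w\<in>R. f w) = int (card R)" "w \<in> R"
  shows "f w = 1"
proof -
  have "(\<Sum>w\<in>R. 1 - f w) = 0" using assms(3) by (simp add: sum_subtractf)
  then have "\<forall>w\<in>R. 1 - f w = 0" using assms(1,2) by (subst (asm) sum_nonneg_eq_0_iff) auto
  then show ?thesis using assms(4) by auto
qed

lemma sum_ge_card:
  fixes f :: "'b \<Rightarrow> int"
  assumes "finite R" "\<And>w. w\<in>R \<Longrightarrow> f w \<ge> -1"
  shows "(\<Sum>w\<in>R. f w) \<ge> - int (card R)"
proof -
  have "(\<Sum>w\<in>R. f w) \<ge> (\<Sum>w\<in>R. -1)" by (rule sum_mono) (use assms in auto)
  then show ?thesis by simp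
qed

lemma sum_le_card:
  fixes f :: "'b \<Rightarrow> int"
  assumes "finite R" "\<And>w. w\<in>R \<Longrightarrow> f w \<le> 1"
  shows "(\<Sum>w\<in>R. f w) \<le> int (card R)"
proof -
  have "(\<Sum>w\<in>R. f w) \<le> (\<Sum>w\<in>R. 1)" by (rule sum_mono) (use assms in auto)
  then show ?thesis by simp
qed

locale SG =
  fixes V :: "'a set" and s :: "'a \<Rightarrow> 'a \<Rightarrow> int"
  assumes sg: "signed_graph V s"
  and deg: "\<And>v. v \<in> V \<Longrightarrow> card {w\<in>V. s v w \<noteq> 0} = 5"
  and net: "\<And>v. v \<in> V \<Longrightarrow> int (card {w\<in>V. s v w = 1}) - int (card {w\<in>V. s v w = -1}) = 3"
  and bal: "\<not> has_unbalanced_triangle V s"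
begin

definition P where "P v = {w\<in>V. s v w = 1}"
definition Ng where "Ng v = {w\<in>V. s v w = -1}"

lemma fin: "finite V" using sg unfolding signed_graph_def by auto
lemma sym: "s u v = s v u" using sg unfolding signed_graph_def by auto
lemma diag[simp]: "s u u = 0" using sg unfolding signed_graph_def by auto
lemma rng: "s u v = -1 \<or> s u v = 0 \<or> s u v = 1" using sg unfolding signed_graph_def by auto
lemma inV: "s u v \<noteq> 0 \<Longrightarrow> u \<in> V \<and> v \<in> V" using sg unfolding signed_graph_def by auto

lemma finP[simp]: "finite (P v)" unfolding P_def using fin by auto
lemma PV: "P v \<subseteq> V" unfolding P_def by auto

lemma cards: assumes "v \<in> V" shows "card (P v) = 4" "card (Ng v) = 1"
proof -
  have e: "{w\<in>V. s v w \<noteq> 0} = P v \<union> Ng v" unfolding P_def Ng_def using rng by force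
  have d: "P v \<inter> Ng v = {}" unfolding P_def Ng_def by auto
  have f: "finite (P v)" "finite (Ng v)" using fin unfolding P_def Ng_def by auto
  have "card (P v) + card (Ng v) = 5" using deg[OF assms] card_Un_disjoint[OF f d] e by simp
  moreover have "int (card (P v)) - int (card (Ng v)) = 3" using net[OF assms] unfolding P_def Ng_def .
  ultimately show "card (P v) = 4" "card (Ng v) = 1" by auto
qed

lemma ex_m: assumes "v \<in> V" shows "\<exists>!w. s v w = -1"
proof -
  from cards(2)[OF assms] obtain w where w: "Ng v = {w}" by (rule card_1_singletonE)
  have "w \<in> Ng v" using w by simp
  then have sw: "s v w = -1" unfolding Ng_def by simp
  have u: "w' = w" if h: "s v w' = -1" for w'
  proof -
    have "s v w' \<noteq> 0" using h by simp
    then have "w' \<in> V" using inV by blast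
    then have "w' \<in> Ng v" unfolding Ng_def using h by simp
    then show "w' = w" using w by simp
  qed
  show ?thesis using sw u by (intro ex1I[of _ w])
qed

definition m where "m v = (THE w. s v w = -1)"

lemma m1: "v \<in> V \<Longrightarrow> s v (m v) = -1"
  unfolding m_def using ex_m by (rule theI')
lemma m_iff: assumes "v \<in> V" shows "s v w = -1 \<longleftrightarrow> w = m v"
proof
  assume h: "s v w = -1"
  show "w = m v" using ex_m[OF assms] h m1[OF assms] by (auto simp del: diag)
next
  assume "w = m v" then show "s v w = -1" using m1[OF assms] by simp
qed
lemma mV: "v \<in> V \<Longrightarrow> m v \<in> V" using m1[of v] inV[of v "m v"] by simp
lemma mm[simp]: assumes "v \<in> V" shows "m (m v) = v"
proof -
  have "s (m v) v = -1" using m1[OF assms] sym by metis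
  then show ?thesis using m_iff[OF mV[OF assms]] by simp
qed
lemma m_ne: assumes "v \<in> V" shows "m v \<noteq> v"
proof
  assume "m v = v" then have "s v v = -1" using m1[OF assms] by simp
  then show False by simp
qed
lemma Ng_eq: assumes "v \<in> V" shows "Ng v = {m v}"
proof
  show "Ng v \<subseteq> {m v}" unfolding Ng_def using m_iff[OF assms] by blast
  show "{m v} \<subseteq> Ng v" unfolding Ng_def using m1[OF assms] mV[OF assms] by simp
qed

lemma tri: assumes "s u v \<noteq> 0" "s v w \<noteq> 0" "s u w \<noteq> 0" shows "s u v * s v w * s u w = 1"
proof -
  have V: "u \<in> V" "v \<in> V" "w \<in> V" using inV assms by auto
  have "s u v * s v w * s u w \<noteq> -1" using bal V assms unfolding has_unbalanced_triangle_def adj_def by blast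
  then show ?thesis using rng[of u v] rng[of v w] rng[of u w] assms by auto
qed

lemma nocommon: assumes "v \<in> V" "s v w \<noteq> 0" shows "s (m v) w = 0"
proof (rule ccontr)
  assume h: "s (m v) w \<noteq> 0"
  have "s v (m v) * s (m v) w * s v w = 1" using tri[of v "m v" w] m1[OF assms(1)] h assms(2) by auto
  then have "s (m v) w * s v w = -1" using m1[OF assms(1)] by simp
  then have "s (m v) w = -1 \<or> s v w = -1" using rng[of "m v" w] rng[of v w] by auto
  then show False
  proof
    assume "s (m v) w = -1"
    then have "w = v" using m_iff[of "m v" w] mV assms by auto
    then show False using assms by simp
  next
    assume "s v w = -1"
    then have "w = m v" using m_iff assms by auto
    then show False using h by simp
  qed
qed

lemma poscommon: assumes "s u v = 1" "s u w \<noteq> 0" "s w v \<noteq> 0" shows "s u w = 1 \<and> s w v = 1"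
proof -
  have V: "u \<in> V" "v \<in> V" "w \<in> V" using inV assms by auto
  have "s u w * s w v * s u v = 1" using tri[of u w v] assms by auto
  then have p: "s u w * s w v = 1" using assms by simp
  show ?thesis
  proof (rule ccontr)
    assume "\<not> ?thesis"
    then have "s u w = -1" "s w v = -1" using p rng[of u w] rng[of w v] by auto
    then have "w = m u" "w = m v" using m_iff V sym[of w v] by auto
    then have "u = v" using mm V by metis
    then show False using assms by simp
  qed
qed

lemma A2_form: assumes "u \<in> V" shows "A2 V s u v = (\<Sum>w\<in>P u. s w v) - s (m u) v"
proof -
  have "A2 V s u v = (\<Sum>w\<in>V. (if s u w = 1 then s w v else 0) - (if s u w = -1 then s w v else 0))"
    unfolding A2_def by (rule sum.cong) (use rng in auto)
  also have "\<dots> = (\<Sum>w\<in>P u. s w v) - (\<Sum>w\<in>Ng u. s w v)"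
    unfolding P_def Ng_def by (simp add: sum_subtractf sum.inter_filter fin)
  also have "\<dots> = (\<Sum>w\<in>P u. s w v) - s (m u) v" using Ng_eq assms by simp
  finally show ?thesis .
qed

lemma rowsum: assumes "u \<in> V" shows "(\<Sum>v\<in>V. s u v) = 3"
proof -
  have "(\<Sum>v\<in>V. s u v) = (\<Sum>v\<in>V. (if s u v = 1 then 1 else 0) - (if s u v = -1 then 1 else 0))"
    by (rule sum.cong) (use rng in auto)
  also have "\<dots> = int (card (P u)) - int (card (Ng u))"
    unfolding P_def Ng_def by (simp add: sum_subtractf sum.inter_filter[symmetric] fin)
  finally show ?thesis using cards assms by simp
qed

lemma A2_rowsum: assumes "u \<in> V" shows "(\<Sum>v\<in>V. A2 V s u v) = 9"
proof -
  have "(\<Sum>v\<in>V. A2 V s u v) = (\<Sum>v\<in>V. (\<Sum>w\<in>P u. s w v)) - (\<Sum>v\<in>V. s (m u) v)"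
    using A2_form[OF assms] by (simp add: sum_subtractf)
  also have "(\<Sum>v\<in>V. (\<Sum>w\<in>P u. s w v)) = (\<Sum>w\<in>P u. (\<Sum>v\<in>V. s w v))" by (rule sum.swap)
  also have "\<dots> = (\<Sum>w\<in>P u. 3)" by (rule sum.cong) (use rowsum PV in auto)
  also have "(\<Sum>v\<in>V. s (m u) v) = 3" using rowsum mV assms by auto
  finally show ?thesis using cards assms by simp
qed

lemma A2_diag: assumes "u \<in> V" shows "A2 V s u u = 5"
proof -
  have "A2 V s u u = (\<Sum>w\<in>V. if s u w \<noteq> 0 then 1 else 0)"
    unfolding A2_def
  proof (rule sum.cong)
    fix w
    have "s w u = s u w" by (rule sym)
    then show "s u w * s w u = (if s u w \<noteq> 0 then 1 else 0)" using rng[of u w] by auto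
  qed simp
  also have "\<dots> = 5" using deg[OF assms] by (simp add: sum.inter_filter[symmetric] fin)
  finally show ?thesis .
qed

lemma A2_neg: assumes "u \<in> V" shows "A2 V s u (m u) = 0"
proof -
  have "(\<Sum>w\<in>P u. s w (m u)) = 0"
    by (rule sum.neutral) (use nocommon[OF assms] sym P_def in auto)
  then show ?thesis using A2_form[OF assms] by simp
qed

lemma pos01: assumes "s u v = 1" "w \<in> P u" shows "s w v = 0 \<or> s w v = 1"
  using poscommon[OF assms(1), of w] assms(2) unfolding P_def by auto

lemma A2_pos: assumes "s u v = 1" shows "A2 V s u v = (\<Sum>w\<in>P u. s w v)"
proof -
  have "u \<in> V" using inV[of u v] assms by simp
  moreover have "s (m u) v = 0" using nocommon[OF \<open>u\<in>V\<close>, of v] assms by auto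
  ultimately show ?thesis using A2_form by simp
qed

lemma A2_pos_range: assumes "s u v = 1" shows "0 \<le> A2 V s u v \<and> A2 V s u v \<le> 3"
proof -
  have u: "u \<in> V" and vP: "v \<in> P u" using inV[of u v] assms unfolding P_def by auto
  have "A2 V s u v = (\<Sum>w\<in>P u - {v}. s w v)"
    using A2_pos[OF assms] vP by (simp add: sum.remove)
  moreover have "(\<Sum>w\<in>P u - {v}. s w v) \<le> int (card (P u - {v}))"
    by (rule sum_le_card) (use pos01[OF assms] in force)+
  moreover have "(\<Sum>w\<in>P u - {v}. s w v) \<ge> 0"
    by (rule sum_nonneg) (use pos01[OF assms] in force)
  moreover have "card (P u - {v}) = 3" using cards(1)[OF u] vP by simp
  ultimately show ?thesis by simp
qed

end


locale SRS = SG +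
  fixes n :: nat and a b c :: int
  assumes cardV: "card V = n"
  and Ha: "\<And>i j. i\<in>V \<Longrightarrow> j\<in>V \<Longrightarrow> i\<noteq>j \<Longrightarrow> s i j = 1 \<Longrightarrow> A2 V s i j = a"
  and Hb: "\<And>i j. i\<in>V \<Longrightarrow> j\<in>V \<Longrightarrow> i\<noteq>j \<Longrightarrow> s i j = -1 \<Longrightarrow> A2 V s i j = b"
  and Hc: "\<And>i j. i\<in>V \<Longrightarrow> j\<in>V \<Longrightarrow> i\<noteq>j \<Longrightarrow> s i j = 0 \<Longrightarrow> A2 V s i j = c"
  and ne: "V \<noteq> {}"
begin

lemma b0: "b = 0"
proof -
  obtain u where u: "u \<in> V" using ne by auto
  show ?thesis using Hb[OF u mV[OF u] m_ne[OF u, symmetric] m1[OF u]] A2_neg[OF u] by simp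
qed

lemma a_eq: assumes "s u v = 1" shows "A2 V s u v = a"
proof -
  have "u \<in> V" "v \<in> V" using inV[of u v] assms by auto
  moreover have "u \<noteq> v" using assms by auto
  ultimately show ?thesis using Ha assms by blast
qed

lemma c_eq: "u \<in> V \<Longrightarrow> v \<in> V \<Longrightarrow> u \<noteq> v \<Longrightarrow> s u v = 0 \<Longrightarrow> A2 V s u v = c"
  using Hc by blast

lemma a_range: "0 \<le> a \<and> a \<le> 3"
proof -
  obtain u where u: "u \<in> V" using ne by auto
  have "P u \<noteq> {}" using cards(1)[OF u] by auto
  then obtain x where "x \<in> P u" by auto
  then have "s u x = 1" unfolding P_def by auto
  then show ?thesis using A2_pos_range a_eq by metis
qed

definition Q where "Q u = {v\<in>V. v \<noteq> u \<and> s u v = 0}"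

lemma cardQ: assumes u: "u \<in> V" shows "card (Q u) = n - 6" "n \<ge> 6"
proof -
  let ?S = "insert u {w\<in>V. s u w \<noteq> 0}"
  have "card ?S = 6" using deg[OF u] fin by (subst card_insert_disjoint) auto
  moreover have "?S \<subseteq> V" using u by auto
  moreover have "Q u = V - ?S" unfolding Q_def by auto
  ultimately show "card (Q u) = n - 6" using fin cardV
    by (simp add: card_Diff_subset)
  have "card ?S \<le> card V" by (rule card_mono) (use fin \<open>?S \<subseteq> V\<close> in auto)
  then show "n \<ge> 6" using \<open>card ?S = 6\<close> cardV by simp
qed

lemma rowid: "4 * a + c * (int n - 6) = 4"
proof -
  obtain u where u: "u \<in> V" using ne by auto
  have "(\<Sum>v\<in>V. A2 V s u v) = (\<Sum>v\<in>V. (if v = u then 5 else 0) + (if s u v = 1 then a else 0)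
      + (if s u v = -1 then b else 0) + (if v \<in> Q u then c else 0))"
  proof (rule sum.cong)
    fix v assume v: "v \<in> V"
    show "A2 V s u v = (if v = u then 5 else 0) + (if s u v = 1 then a else 0)
      + (if s u v = -1 then b else 0) + (if v \<in> Q u then c else 0)"
    proof (cases "v = u")
      case True then show ?thesis using A2_diag[OF u] unfolding Q_def by simp
    next
      case False
      consider "s u v = 1" | "s u v = -1" | "s u v = 0" using rng[of u v] by auto
      then show ?thesis
      proof cases
        case 1 then show ?thesis using a_eq[OF 1] False unfolding Q_def by simp
      next
        case 2 then show ?thesis using Hb[OF u v] False unfolding Q_def by simp
      next
        case 3 then show ?thesis using c_eq[OF u v] False v unfolding Q_def by simp
      qed
    qed
  qed simp
  also have "\<dots> = 5 + a * int (card (P u)) + b * int (card (Ng u)) + c * int (card (Q u))"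
    using u fin unfolding P_def Ng_def Q_def
    by (simp add: sum.distrib sum.inter_filter[symmetric] mult.commute)
  finally have "9 = 5 + a * 4 + b + c * int (card (Q u))" using A2_rowsum[OF u] cards[OF u] by simp
  then show ?thesis using cardQ[OF u] b0 by (simp add: of_nat_diff)
qed

lemma n7: assumes "\<not> sg_complete V s" shows "n \<ge> 7"
proof -
  obtain u v where uv: "u \<in> V" "v \<in> V" "u \<noteq> v" "s u v = 0"
    using assms unfolding sg_complete_def adj_def by auto
  then have "v \<in> Q u" unfolding Q_def by auto
  moreover have "finite (Q u)" using fin unfolding Q_def by simp
  ultimately have "card (Q u) \<ge> 1" by (metis card_0_eq empty_iff less_one not_le)
  then show ?thesis using cardQ[OF uv(1)] by simp
qed

end


lemma iso_gen:
  fixes V X Y :: "'a set" and s :: "'a \<Rightarrow> 'a \<Rightarrow> int" and m :: "'a \<Rightarrow> 'a" and g :: "'a \<Rightarrow> nat"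
    and T :: "nat \<Rightarrow> nat \<Rightarrow> int" and e d :: int
  assumes XY: "X \<inter> Y = {}" "V = X \<union> Y" and g: "bij_betw g X {0..<5}"
  and mY: "\<And>y. y\<in>Y \<Longrightarrow> m y \<in> X" and mX: "\<And>x. x\<in>X \<Longrightarrow> m x \<in> Y"
  and mm: "\<And>z. z \<in> V \<Longrightarrow> m (m z) = z"
  and sXX: "\<And>x1 x2. x1\<in>X \<Longrightarrow> x2\<in>X \<Longrightarrow> s x1 x2 = (if x1 = x2 then 0 else e)"
  and sYY: "\<And>x1 x2. x1\<in>Y \<Longrightarrow> x2\<in>Y \<Longrightarrow> s x1 x2 = (if x1 = x2 then 0 else e)"
  and sXY: "\<And>x y. x\<in>X \<Longrightarrow> y\<in>Y \<Longrightarrow> s x y = (if y = m x then -1 else d)"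
  and sYX: "\<And>x y. x\<in>X \<Longrightarrow> y\<in>Y \<Longrightarrow> s y x = (if y = m x then -1 else d)"
  and T: "\<And>i j. T i j = (if i \<in> V10 \<and> j \<in> V10 then (if i = j then 0 else if (i<5 \<longleftrightarrow> j<5) then e
             else if i = j+5 \<or> j = i+5 then -1 else d) else 0)"
  shows "sg_isomorphic V s V10 T"
proof -
  define f where "f z = (if z \<in> X then g z else g (m z) + 5)" for z
  have ginj: "inj_on g X" and gim: "g ` X = {0..<5}" using g by (auto simp: bij_betw_def)
  have g5: "x \<in> X \<Longrightarrow> g x < 5" for x using gim by auto
  have fX: "z \<in> X \<Longrightarrow> f z = g z" for z unfolding f_def by simp
  have fY: "z \<in> Y \<Longrightarrow> f z = g (m z) + 5" for z unfolding f_def using XY by auto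
  have inj: "inj_on f V"
  proof (rule inj_onI)
    fix z1 z2 assume z: "z1 \<in> V" "z2 \<in> V" "f z1 = f z2"
    show "z1 = z2"
    proof (cases "z1 \<in> X"; cases "z2 \<in> X")
      assume "z1 \<in> X" "z2 \<in> X" then show ?thesis using z fX ginj inj_onD by metis
    next
      assume "z1 \<in> X" "z2 \<notin> X" then show ?thesis using z fX fY g5 XY mY
        by (metis Un_iff add_lessD1 not_add_less2)
    next
      assume "z1 \<notin> X" "z2 \<in> X" then show ?thesis using z fX fY g5 XY mY
        by (metis Un_iff add_lessD1 not_add_less2)
    next
      assume "z1 \<notin> X" "z2 \<notin> X"
      then have "z1 \<in> Y" "z2 \<in> Y" using z XY by auto
      then have "g (m z1) = g (m z2)" using z fY by simp
      then have "m z1 = m z2" using ginj mY \<open>z1 \<in> Y\<close> \<open>z2 \<in> Y\<close> inj_onD by metis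
      then show ?thesis using mm z by metis
    qed
  qed
  have im: "f ` V = V10"
  proof
    show "f ` V \<subseteq> V10" unfolding V10_def using fX fY g5 XY mY by fastforce
    show "V10 \<subseteq> f ` V"
    proof
      fix k assume k: "k \<in> V10"
      show "k \<in> f ` V"
      proof (cases "k < 5")
        case True
        then obtain x where "x \<in> X" "g x = k" using gim by (metis atLeastLessThan_iff imageE zero_le)
        then show ?thesis using fX XY by force
      next
        case False
        then have "k - 5 \<in> {0..<5}" using k unfolding V10_def by auto
        then obtain x where x: "x \<in> X" "g x = k - 5" using gim by (metis imageE)
        then have "m x \<in> Y" "f (m x) = k" using mX fY mm XY False by auto
        then show ?thesis using XY by force
      qed
    qed
  qed
  have edge: "T (f z1) (f z2) = s z1 z2" if z: "z1 \<in> V" "z2 \<in> V" for z1 z2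
  proof -
    have V10: "f z1 \<in> V10" "f z2 \<in> V10" using im z by auto
    show ?thesis
    proof (cases "z1 \<in> X"; cases "z2 \<in> X")
      assume a: "z1 \<in> X" "z2 \<in> X"
      then have "f z1 = f z2 \<longleftrightarrow> z1 = z2" using inj z by (auto dest: inj_onD)
      then show ?thesis using a sXX fX g5 T V10 by simp
    next
      assume a: "z1 \<in> X" "z2 \<notin> X"
      then have y: "z2 \<in> Y" using z XY by auto
      have "g (m z2) = g z1 \<longleftrightarrow> m z2 = z1"
        using ginj mY[OF y] a(1) by (auto dest: inj_onD)
      also have "\<dots> \<longleftrightarrow> z2 = m z1" using mm z(1,2) by auto
      finally have "g (m z2) = g z1 \<longleftrightarrow> z2 = m z1" .
      have f1: "f z1 = g z1" "f z2 = g (m z2) + 5" using fX fY a y by auto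
      have l: "g z1 < 5" using g5 a by auto
      have "T (f z1) (f z2) = (if f z2 = f z1 + 5 then -1 else d)"
        unfolding T using V10 f1 l by simp
      also have "\<dots> = s z1 z2" using sXY[OF a(1) y] f1 \<open>g (m z2) = g z1 \<longleftrightarrow> z2 = m z1\<close> by simp
      finally show ?thesis .
    next
      assume a: "z1 \<notin> X" "z2 \<in> X"
      then have y: "z1 \<in> Y" using z XY by auto
      have "g (m z1) = g z2 \<longleftrightarrow> m z1 = z2"
        using ginj mY[OF y] a(2) by (auto dest: inj_onD)
      also have "\<dots> \<longleftrightarrow> z1 = m z2" using mm z(1,2) by auto
      finally have "g (m z1) = g z2 \<longleftrightarrow> z1 = m z2" .
      have f1: "f z2 = g z2" "f z1 = g (m z1) + 5" using fX fY a y by auto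
      have l: "g z2 < 5" using g5 a by auto
      have "T (f z1) (f z2) = (if f z1 = f z2 + 5 then -1 else d)"
        unfolding T using V10 f1 l by simp
      also have "\<dots> = s z1 z2" using sYX[OF a(2) y] f1 \<open>g (m z1) = g z2 \<longleftrightarrow> z1 = m z2\<close> by simp
      finally show ?thesis .
    next
      assume a: "z1 \<notin> X" "z2 \<notin> X"
      then have y: "z1 \<in> Y" "z2 \<in> Y" using z XY by auto
      then have "f z1 = f z2 \<longleftrightarrow> z1 = z2" using inj z by (auto dest: inj_onD)
      then show ?thesis using a y sYY fY g5 T V10 by simp
    qed
  qed
  show ?thesis unfolding sg_isomorphic_def
    by (rule exI[of _ f]) (use inj im edge in \<open>auto simp: bij_betw_def\<close>)
qed

lemma S2_form: "S2_10 i j = (if i \<in> V10 \<and> j \<in> V10 then (if i = j then 0 else if (i<5 \<longleftrightarrow> j<5) then 0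
             else if i = j+5 \<or> j = i+5 then -1 else 1) else 0)"
  unfolding S2_10_def by auto

lemma S3_form: "S3_10 i j = (if i \<in> V10 \<and> j \<in> V10 then (if i = j then 0 else if (i<5 \<longleftrightarrow> j<5) then 1
             else if i = j+5 \<or> j = i+5 then -1 else 0) else 0)"
  unfolding S3_10_def by auto



context SRS begin

lemma sum01_zero:
  assumes "s u v = 1" "A2 V s u v = 0" "w \<in> P u" shows "s w v = 0"
proof -
  have "(\<Sum>w\<in>P u. s w v) = 0" using A2_pos assms by simp
  moreover have "\<forall>w\<in>P u. 0 \<le> s w v" using pos01[OF assms(1)] by force
  ultimately show ?thesis using assms(3) by (simp add: sum_nonneg_eq_0_iff)
qed

lemma case0:
  assumes a0: "a = 0" and c0: "c \<noteq> 0"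
  shows "sg_isomorphic V s V10 S2_10 \<and> n = 10 \<and> c = 1"
proof -
  have tf: "s v w = 0" if h: "s u v \<noteq> 0" "s u w \<noteq> 0" for u v w
  proof -
    have u: "u \<in> V" using inV h by auto
    consider "s u v = 1" | "s u v = -1" using rng[of u v] h by auto
    then show ?thesis
    proof cases
      case 1
      show ?thesis
      proof (rule ccontr)
        assume "s v w \<noteq> 0"
        then have "s u w = 1 \<and> s w v = 1" using poscommon[OF 1 h(2)] sym by metis
        moreover have "A2 V s u v = 0" using a_eq[OF 1] a0 by simp
        ultimately show False using sum01_zero[OF 1, of w] inV[of u w] unfolding P_def by simp
      qed
    next
      case 2
      then have "v = m u" using m_iff u by auto
      then show ?thesis using nocommon[OF u h(2)] by simp
    qed
  qed
  obtain u where u: "u \<in> V" using ne by auto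
  define N where "N z = {w\<in>V. s z w \<noteq> 0}" for z
  define X where "X = N (m u)"
  define Y where "Y = N u"
  have finN: "finite (N z)" for z unfolding N_def using fin by auto
  have cN: "z \<in> V \<Longrightarrow> card (N z) = 5" for z unfolding N_def using deg by auto
  have NV: "N z \<subseteq> V" for z unfolding N_def by auto
  have mu: "m u \<in> V" using mV u by auto
  have XY: "X \<inter> Y = {}" unfolding X_def Y_def N_def using nocommon[OF u] sym by fastforce
  have cXY: "card (X \<union> Y) = 10" using XY cN u mu finN unfolding X_def Y_def
    by (simp add: card_Un_disjoint)
  have "X \<union> Y \<subseteq> V" using NV unfolding X_def Y_def by auto
  then have "card (X \<union> Y) \<le> card V" using fin by (rule card_mono[rotated])
  then have n10: "n \<ge> 10" using cXY cardV by simp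
  have k: "c * (int n - 6) = 4" using rowid a0 by simp
  have "int n - 6 = 4 \<and> c = 1"
  proof -
    have "c > 0"
    proof (rule ccontr)
      assume "\<not> c > 0"
      then have "c * (int n - 6) \<le> 0" using n10 by (simp add: mult_nonpos_nonneg)
      then show False using k by simp
    qed
    then have "c * (int n - 6) \<ge> 1 * (int n - 6)" using n10 by (intro mult_right_mono) auto
    then have "int n - 6 = 4" using k n10 by simp
    then show ?thesis using k by simp
  qed
  then have nn: "n = 10" and cc: "c = 1" by auto
  have VXY: "V = X \<union> Y"
    by (rule card_subset_eq[symmetric]) (use \<open>X \<union> Y \<subseteq> V\<close> cXY cardV nn fin in auto)
  have indX: "s x1 x2 = 0" if "x1 \<in> X" "x2 \<in> X" for x1 x2
    using tf[of "m u" x1 x2] that unfolding X_def N_def by auto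
  have indY: "s x1 x2 = 0" if "x1 \<in> Y" "x2 \<in> Y" for x1 x2
    using tf[of u x1 x2] that unfolding Y_def N_def by auto
  have NX: "N x = Y" if x: "x \<in> X" for x
  proof -
    have xV: "x \<in> V" using x NV X_def by auto
    have "N x \<subseteq> Y" using indX x VXY unfolding N_def by auto
    then show ?thesis by (rule card_subset_eq[rotated]) (use cN[OF xV] cN[OF u] finN Y_def in auto)
  qed
  have NY: "N y = X" if y: "y \<in> Y" for y
  proof -
    have yV: "y \<in> V" using y NV Y_def by auto
    have "N y \<subseteq> X" using indY y VXY unfolding N_def by auto
    then show ?thesis by (rule card_subset_eq[rotated]) (use cN[OF yV] cN[OF mu] finN X_def in auto)
  qed
  have mXY: "m x \<in> Y" if "x \<in> X" for x
  proof -
    have xV: "x \<in> V" using that VXY by auto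
    have "m x \<in> N x" unfolding N_def using m1[OF xV] mV[OF xV] by auto
    then show ?thesis using NX[OF that] by simp
  qed
  have mYX: "m y \<in> X" if "y \<in> Y" for y
  proof -
    have yV: "y \<in> V" using that VXY by auto
    have "m y \<in> N y" unfolding N_def using m1[OF yV] mV[OF yV] by auto
    then show ?thesis using NY[OF that] by simp
  qed
  have cX: "card X = 5" using cN mu X_def by simp
  obtain g :: "_ \<Rightarrow> nat" where g: "bij_betw g X {0..<5}" using ex_bij_betw_finite_nat[of X] finN cX X_def by auto
  have sXY: "s x y = (if y = m x then -1 else 1)" if "x \<in> X" "y \<in> Y" for x y
  proof -
    have xV: "x \<in> V" using that VXY by auto
    have "s x y \<noteq> 0" using NX[OF that(1)] that(2) unfolding N_def by auto
    then show ?thesis using rng[of x y] m_iff[OF xV] by auto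
  qed
  have "sg_isomorphic V s V10 S2_10"
  proof (rule iso_gen[where X = X and Y = Y and m = m and g = g and e = 0 and d = 1])
    show "s y x = (if y = m x then -1 else 1)" if "x \<in> X" "y \<in> Y" for x y
      using sXY[OF that] sym by simp
  qed (use XY VXY g mXY mYX mm sXY indX indY S2_form in auto)
  then show ?thesis using nn cc by simp
qed

end


context SRS begin

definition K where "K v = insert v (P v)"

lemma KV: "v \<in> V \<Longrightarrow> K v \<subseteq> V" unfolding K_def using PV by auto
lemma finK: "finite (K v)" unfolding K_def by simp
lemma cardK: assumes "v \<in> V" shows "card (K v) = 5"
proof -
  have "v \<notin> P v" unfolding P_def by simp
  then show ?thesis unfolding K_def using cards(1)[OF assms] by simp
qed
lemma Kadj: "w \<in> K v \<Longrightarrow> w \<noteq> v \<Longrightarrow> s v w = 1" unfolding K_def P_def by auto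

lemma Pshift: assumes a3: "a = 3" and vw: "s v w = 1" and x: "x \<in> P v - {w}" shows "s x w = 1"
proof -
  have v: "v \<in> V" and wP: "w \<in> P v" using inV[of v w] vw unfolding P_def by auto
  have "A2 V s v w = (\<Sum>y\<in>P v - {w}. s y w)"
    using A2_pos[OF vw] wP by (simp add: sum.remove)
  then have sm: "(\<Sum>y\<in>P v - {w}. s y w) = int (card (P v - {w}))"
    using a_eq[OF vw] a3 cards(1)[OF v] wP by simp
  show ?thesis
    by (rule sum_all1[OF _ _ sm x]) (use pos01[OF vw] in force)+
qed

lemma Ksub: assumes a3: "a = 3" and vw: "s v w = 1" shows "K v \<subseteq> K w"
proof
  fix x assume x: "x \<in> K v"
  have v: "v \<in> V" using inV[of v w] vw by auto
  show "x \<in> K w"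
  proof (cases "x = v")
    case True
    have "s w v = 1" using vw sym by metis
    then show ?thesis using True v unfolding K_def P_def by simp
  next
    case False
    then have xP: "x \<in> P v" using x unfolding K_def by simp
    show ?thesis
    proof (cases "x = w")
      case True then show ?thesis unfolding K_def by simp
    next
      case False
      then have "s x w = 1" using Pshift[OF a3 vw] xP by simp
      then have "s w x = 1" using sym by metis
      then show ?thesis using xP unfolding K_def P_def by simp
    qed
  qed
qed

lemma Keq: assumes a3: "a = 3" and vw: "s v w = 1" shows "K v = K w"
proof -
  have "v \<in> V" "w \<in> V" using inV[of v w] vw by auto
  then show ?thesis using card_subset_eq[OF finK Ksub[OF a3 vw]] cardK by simp
qed

lemma Kmem: assumes a3: "a = 3" and v: "v \<in> V" and w: "w \<in> K v" shows "K w = K v"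
proof (cases "w = v")
  case False
  then have "s v w = 1" using Kadj w by simp
  then show ?thesis using Keq[OF a3] by simp
qed simp

lemma Kint: assumes a3: "a = 3" and "v \<in> V" "w \<in> V" "z \<in> K v" "z \<in> K w" shows "K v = K w"
proof -
  have "K z = K v" using Kmem[OF a3 assms(2,4)] .
  moreover have "K z = K w" using Kmem[OF a3 assms(3,5)] .
  ultimately show ?thesis by simp
qed

lemma cval: assumes a3: "a = 3" and u: "u \<in> V" and x: "x \<in> P u"
  shows "c = -1 - s (m u) (m x)"
proof -
  have ux: "s u x = 1" and xV: "x \<in> V" using x unfolding P_def by auto
  have z: "s w (m x) = 0" if w: "w \<in> P u - {x}" for w
  proof -
    have "s w x = 1" using Pshift[OF a3 ux w] .
    then have "s x w \<noteq> 0" using sym by (metis one_neq_zero)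
    then have "s (m x) w = 0" using nocommon[OF xV] by simp
    then show ?thesis using sym by metis
  qed
  have "(\<Sum>w\<in>P u. s w (m x)) = s x (m x) + (\<Sum>w\<in>P u - {x}. s w (m x))"
    using x by (simp add: sum.remove)
  also have "\<dots> = -1" using m1[OF xV] z by simp
  finally have S: "(\<Sum>w\<in>P u. s w (m x)) = -1" .
  have ne: "u \<noteq> m x"
  proof
    assume "u = m x" then have "m u = x" using mm[OF xV] by simp
    then have "s u x = -1" using m1[OF u] by simp
    then show False using ux by simp
  qed
  have "s x u \<noteq> 0" using ux sym by (metis one_neq_zero)
  then have "s (m x) u = 0" using nocommon[OF xV] by simp
  then have "s u (m x) = 0" using sym by metis
  then have "A2 V s u (m x) = c" using c_eq[OF u mV[OF xV] ne] by simp
  then show ?thesis using A2_form[OF u, of "m x"] S by simp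
qed

lemma mx_ne: assumes u: "u \<in> V" and x: "x \<in> P u" shows "s (m u) (m x) \<noteq> -1"
proof
  have ux: "s u x = 1" and xV: "x \<in> V" using x unfolding P_def by auto
  assume "s (m u) (m x) = -1"
  then have "m x = u" using m_iff[OF mV[OF u]] mm[OF u] by simp
  then have "x = m u" using mm[OF xV] by metis
  then show False using m1[OF u] ux by simp
qed

lemma case3:
  assumes a3: "a = 3" and c0: "c \<noteq> 0"
  shows "sg_isomorphic V s V10 S3_10 \<and> n = 10 \<and> c = -2"
proof -
  have k: "c * (int n - 6) = -8" using rowid a3 by simp
  obtain u where u: "u \<in> V" using ne by auto
  have "P u \<noteq> {}" using cards(1)[OF u] by auto
  then obtain x where x: "x \<in> P u" by auto
  have ux: "s u x = 1" and xV: "x \<in> V" using x unfolding P_def by auto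
  have mu: "m u \<in> V" and mxV: "m x \<in> V" using mV u xV by auto
  have cv: "c = -1 - s (m u) (m x)" using cval[OF a3 u x] .
  have "c = -1 \<or> c = -2" using cv mx_ne[OF u x] rng[of "m u" "m x"] c0 by auto
  moreover
  have "n \<ge> 6" using cardQ[OF u] by simp
  have d1: "K u \<inter> K (m u) = {}"
  proof (rule ccontr)
    assume "K u \<inter> K (m u) \<noteq> {}"
    then have "K u = K (m u)" using Kint[OF a3 u mu] by blast
    then have "m u \<in> K u" unfolding K_def by auto
    then have "s u (m u) = 1" using Kadj m_ne[OF u] by simp
    then show False using m1[OF u] by simp
  qed
  {
    assume c1: "c = -1"
    then have n14: "n = 14" using k \<open>n \<ge> 6\<close> by simp
    have s0: "s (m u) (m x) = 0" using cv c1 by simp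
    have d2: "K (m u) \<inter> K (m x) = {}"
    proof (rule ccontr)
      assume "K (m u) \<inter> K (m x) \<noteq> {}"
      then have "K (m u) = K (m x)" using Kint[OF a3 mu mxV] by blast
      then have "m x \<in> K (m u)" unfolding K_def by auto
      moreover have "m x \<noteq> m u"
      proof
        assume "m x = m u" then have "m (m x) = m (m u)" by simp
        then have "x = u" using mm[OF xV] mm[OF u] by simp
        then show False using ux by simp
      qed
      ultimately have "s (m u) (m x) = 1" using Kadj by simp
      then show False using s0 by simp
    qed
    have d3: "K u \<inter> K (m x) = {}"
    proof (rule ccontr)
      assume "K u \<inter> K (m x) \<noteq> {}"
      then have "K u = K (m x)" using Kint[OF a3 u mxV] by blast
      then have "m x \<in> K u" unfolding K_def by auto
      moreover have "m x \<noteq> u"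
      proof
        assume "m x = u" then have "x = m u" using mm[OF xV] by auto
        then show False using ux m1[OF u] by simp
      qed
      ultimately have "s u (m x) = 1" using Kadj by simp
      then have "s (m x) u \<noteq> 0" using sym by (metis one_neq_zero)
      moreover have "s x u \<noteq> 0" using ux sym by (metis one_neq_zero)
      ultimately show False using nocommon[OF xV] by simp
    qed
    have "card (K u \<union> K (m u) \<union> K (m x)) = 15"
      using d1 d2 d3 cardK u mu mxV finK by (simp add: card_Un_disjoint Int_Un_distrib2)
    moreover have "K u \<union> K (m u) \<union> K (m x) \<subseteq> V" using KV u mu mxV by auto
    ultimately have "15 \<le> card V" using card_mono[OF fin] by metis
    then have False using n14 cardV by simp
  }
  ultimately have c2: "c = -2" by blast
  then have n10: "n = 10" using k \<open>n \<ge> 6\<close> by simp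
  have sp: "s (m u') (m x') = 1" if "u' \<in> V" "x' \<in> P u'" for u' x'
    using cval[OF a3 that] c2 by simp
  define X where "X = K u"
  define Y where "Y = K (m u)"
  have XY: "X \<inter> Y = {}" using d1 X_def Y_def by simp
  have "card (X \<union> Y) = 10" using XY cardK u mu finK X_def Y_def by (simp add: card_Un_disjoint)
  moreover have "X \<union> Y \<subseteq> V" using KV u mu X_def Y_def by auto
  ultimately have VXY: "V = X \<union> Y"
    by (intro card_subset_eq[symmetric]) (use fin cardV n10 in auto)
  have mXY: "m z \<in> Y" if "z \<in> X" for z
  proof (cases "z = u")
    case False
    then have "z \<in> P u" using that X_def K_def by auto
    then have "s (m u) (m z) = 1" using sp u by simp
    moreover have "m z \<in> V" using inV[of "m u" "m z"] calculation by simp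
    ultimately show ?thesis unfolding Y_def K_def P_def by simp
  qed (simp add: Y_def K_def)
  have mYX: "m z \<in> X" if "z \<in> Y" for z
  proof (cases "z = m u")
    case False
    then have "z \<in> P (m u)" using that Y_def K_def by auto
    then have "s (m (m u)) (m z) = 1" using sp mu by simp
    then have "s u (m z) = 1" using mm u by simp
    moreover have "m z \<in> V" using inV[of u "m z"] calculation by simp
    ultimately show ?thesis unfolding X_def K_def P_def by simp
  qed (simp add: X_def K_def u)
  have inner: "s z1 z2 = (if z1 = z2 then 0 else 1)" if "v \<in> V" "z1 \<in> K v" "z2 \<in> K v" for v z1 z2
  proof (cases "z1 = z2")
    case False
    have "K z1 = K v" using Kmem[OF a3 that(1,2)] .
    then have "s z1 z2 = 1" using Kadj that(3) False by simp
    then show ?thesis using False by simp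
  qed simp
  have cross: "s z y = (if y = m z then -1 else 0)" if z: "z \<in> X" "y \<in> Y" for z y
  proof -
    have zV: "z \<in> V" using z VXY by auto
    have "s z y \<noteq> 1"
    proof
      assume "s z y = 1"
      then have "y \<in> K z" unfolding K_def P_def using inV[of z y] by simp
      then have "y \<in> X" using Kmem[OF a3 u, of z] z X_def by simp
      then show False using XY z by auto
    qed
    then show ?thesis using rng[of z y] m_iff[OF zV] by auto
  qed
  have cX: "card X = 5" using cardK u X_def by simp
  obtain g :: "_ \<Rightarrow> nat" where g: "bij_betw g X {0..<5}"
    using ex_bij_betw_finite_nat[of X] finK cX X_def by auto
  have "sg_isomorphic V s V10 S3_10"
  proof (rule iso_gen[where X = X and Y = Y and m = m and g = g and e = 1 and d = 0])
    show "s y z = (if y = m z then -1 else 0)" if "z \<in> X" "y \<in> Y" for z y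
      using cross[OF that] sym by metis
    show "s x1 x2 = (if x1 = x2 then 0 else 1)" if "x1 \<in> X" "x2 \<in> X" for x1 x2
      using inner[OF u] that X_def by simp
    show "s x1 x2 = (if x1 = x2 then 0 else 1)" if "x1 \<in> Y" "x2 \<in> Y" for x1 x2
      using inner[OF mu] that Y_def by simp
  qed (use XY VXY g mXY mYX mm cross S3_form in auto)
  then show ?thesis using n10 c2 by simp
qed

end


context SRS begin

lemma A2c1: assumes a1: "a = 1" and c0: "c = 0" and w: "w \<in> V" and v: "v \<in> V"
  shows "A2 V s w v = (if w = v then 5 else 0) + s w v + (if w = m v then 1 else 0)"
proof (cases "w = v")
  case True then show ?thesis using A2_diag[OF v] m_ne[OF v] by simp
next
  case False
  have iff: "w = m v \<longleftrightarrow> s w v = -1" using m_iff[OF v, of w] sym[of v w] by simp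
  consider "s w v = 1" | "s w v = -1" | "s w v = 0" using rng[of w v] by auto
  then show ?thesis
  proof cases
    case 1 then show ?thesis using a_eq[OF 1] a1 False iff by simp
  next
    case 2 then show ?thesis using Hb[OF w v False 2] b0 False iff by simp
  next
    case 3 then show ?thesis using c_eq[OF w v False 3] c0 False iff by simp
  qed
qed

lemma comm1: assumes a1: "a = 1" and c0: "c = 0" and u: "u \<in> V" and v: "v \<in> V"
  shows "s u (m v) = s (m u) v"
proof -
  have assoc: "(\<Sum>w\<in>V. s u w * A2 V s w v) = (\<Sum>z\<in>V. A2 V s u z * s z v)"
    unfolding A2_def
    by (simp add: sum_distrib_left sum_distrib_right mult.assoc) (rule sum.swap)
  have "(\<Sum>w\<in>V. s u w * A2 V s w v) = (\<Sum>w\<in>V. (if w = v then 5 * s u w else 0) + s u w * s w v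
          + (if w = m v then s u w else 0))"
    by (rule sum.cong) (use A2c1[OF a1 c0 _ v] in \<open>auto simp: algebra_simps\<close>)
  also have "\<dots> = 5 * s u v + A2 V s u v + s u (m v)"
    using v mV[OF v] fin by (simp add: sum.distrib A2_def)
  finally have L: "(\<Sum>w\<in>V. s u w * A2 V s w v) = 5 * s u v + A2 V s u v + s u (m v)" .
  have "(\<Sum>z\<in>V. A2 V s u z * s z v) = (\<Sum>z\<in>V. (if z = u then 5 * s z v else 0) + s u z * s z v
          + (if z = m u then s z v else 0))"
  proof (rule sum.cong)
    fix z assume z: "z \<in> V"
    have "u = m z \<longleftrightarrow> z = m u" using mm[OF z] mm[OF u] by metis
    then show "A2 V s u z * s z v = (if z = u then 5 * s z v else 0) + s u z * s z v
          + (if z = m u then s z v else 0)"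
      using A2c1[OF a1 c0 u z] by (auto simp: algebra_simps)
  qed simp
  also have "\<dots> = 5 * s u v + A2 V s u v + s (m u) v"
    using u mV[OF u] fin by (simp add: sum.distrib A2_def)
  finally show ?thesis using L assoc by simp
qed

lemma case1: assumes a1: "a = 1" and c0: "c = 0" shows False
proof -
  note comm = comm1[OF a1 c0]
  obtain u where u: "u \<in> V" using ne by auto
  have "P u \<noteq> {}" using cards(1)[OF u] by auto
  then obtain x1 where x1: "x1 \<in> P u" by auto
  have ux1: "s u x1 = 1" and x1V: "x1 \<in> V" using x1 unfolding P_def by auto
  obtain x2 where x2: "x2 \<in> P u" "s x2 x1 = 1"
  proof (rule ccontr)
    assume h: "\<not> thesis"
    have "\<forall>w\<in>P u. s w x1 = 0" using pos01[OF ux1] h that by blast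
    then have "A2 V s u x1 = 0" using A2_pos[OF ux1] by simp
    then show False using a_eq[OF ux1] a1 by simp
  qed
  have x2V: "x2 \<in> V" using x2 PV by auto
  have x12: "s x1 x2 = 1" using x2 sym by metis
  have ne12: "x1 \<noteq> x2" using x12 by auto
  have key: "s w (m x) = 1" if xy: "x \<in> P u" "y \<in> P u" "s x y = 1" and w: "w \<in> P u - {x, y}" for x y w
  proof -
    have ux: "s u x = 1" and xV: "x \<in> V" using xy unfolding P_def by auto
    have ne: "u \<noteq> m x"
    proof
      assume "u = m x" then have "m u = x" using mm[OF xV] by simp
      then show False using m1[OF u] ux by simp
    qed
    have "s x u \<noteq> 0" using ux sym by (metis one_neq_zero)
    then have "s (m x) u = 0" using nocommon[OF xV] by simp
    then have "s u (m x) = 0" using sym by metis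
    then have A0: "A2 V s u (m x) = 0" using c_eq[OF u mV[OF xV] ne] c0 by simp
    have "s (m u) (m x) = s u (m (m x))" using comm[OF u mV[OF xV]] by simp
    then have smm: "s (m u) (m x) = 1" using mm[OF xV] ux by simp
    have S1: "(\<Sum>w\<in>P u. s w (m x)) = 1" using A2_form[OF u, of "m x"] A0 smm by simp
    have xy_ne: "x \<noteq> y" using xy by auto
    have "s x y \<noteq> 0" using xy by simp
    then have "s (m x) y = 0" using nocommon[OF xV] by simp
    then have sy: "s y (m x) = 0" using sym by metis
    have "(\<Sum>w\<in>P u. s w (m x)) = (\<Sum>w\<in>P u - {x, y}. s w (m x)) + (\<Sum>w\<in>{x, y}. s w (m x))"
      by (rule sum.subset_diff) (use xy in auto)
    also have "(\<Sum>w\<in>{x, y}. s w (m x)) = -1" using xy_ne m1[OF xV] sy by simp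
    finally have S2: "(\<Sum>w\<in>P u - {x, y}. s w (m x)) = 2" using S1 by simp
    have cR: "card (P u - {x, y}) = 2" using cards(1)[OF u] xy xy_ne by (simp add: card_Diff_subset)
    have le1: "s a' b' \<le> 1" for a' b' using rng[of a' b'] by auto
    show ?thesis using sum_all1[of "P u - {x, y}" "\<lambda>w. s w (m x)" w] S2 w le1 cR by simp
  qed
  define R where "R = P u - {x1, x2}"
  have cR: "card R = 2" using cards(1)[OF u] x1 x2 ne12 unfolding R_def by (simp add: card_Diff_subset)
  have k1: "s w (m x1) = 1" if "w \<in> R" for w using key[OF x1 x2(1) x12] that R_def by simp
  have k2: "s w (m x2) = 1" if "w \<in> R" for w using key[OF x2(1) x1 x2(2)] that R_def by auto
  have mm12: "s (m x1) (m x2) = 1" using comm[OF x1V mV[OF x2V]] mm[OF x2V] x12 by simp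
  have RP: "R \<subseteq> P (m x1)"
  proof
    fix w assume w: "w \<in> R"
    then have "s (m x1) w = 1" using k1 sym by metis
    moreover have "w \<in> V" using w R_def PV by auto
    ultimately show "w \<in> P (m x1)" unfolding P_def by simp
  qed
  have "(\<Sum>w\<in>R. s w (m x2)) \<le> (\<Sum>w\<in>P (m x1). s w (m x2))"
    by (rule sum_mono2) (use RP pos01[OF mm12] in force)+
  moreover have "(\<Sum>w\<in>R. s w (m x2)) = 2" using k2 cR by simp
  moreover have "(\<Sum>w\<in>P (m x1). s w (m x2)) = 1" using A2_pos[OF mm12] a_eq[OF mm12] a1 by simp
  ultimately show False by simp
qed

lemma case2: assumes a2: "a = 2" and c0: "c < 0" shows False
proof -
  obtain u where u: "u \<in> V" using ne by auto
  have "P u \<noteq> {}" using cards(1)[OF u] by auto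
  then obtain x1 where x1: "x1 \<in> P u" by auto
  have ux1: "s u x1 = 1" and x1V: "x1 \<in> V" using x1 unfolding P_def by auto
  have A1: "(\<Sum>w\<in>P u - {x1}. s w x1) = 2"
    using A2_pos[OF ux1] a_eq[OF ux1] a2 x1 by (simp add: sum.remove)
  have c3: "card (P u - {x1}) = 3" using cards(1)[OF u] x1 by simp
  obtain x3 where x3: "x3 \<in> P u - {x1}" "s x3 x1 = 0"
  proof (rule ccontr)
    assume h: "\<not> thesis"
    have "\<forall>w\<in>P u - {x1}. s w x1 = 1" using pos01[OF ux1] h that by blast
    then have "(\<Sum>w\<in>P u - {x1}. s w x1) = 3" using c3 by simp
    then show False using A1 by simp
  qed
  have ux3: "s u x3 = 1" and x3V: "x3 \<in> V" and ne13: "x1 \<noteq> x3" using x3 unfolding P_def by auto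
  have s13: "s x1 x3 = 0" using x3 sym by metis
  define T where "T = P u - {x1, x3}"
  have cT: "card T = 2" using cards(1)[OF u] x1 x3 ne13 unfolding T_def by (simp add: card_Diff_subset)
  have "(\<Sum>w\<in>P u - {x1}. s w x1) = s x3 x1 + (\<Sum>w\<in>T. s w x1)"
    unfolding T_def using x3 by (subst sum.remove[of _ x3]) (auto simp: Diff_insert2[symmetric] insert_commute)
  then have T1: "(\<Sum>w\<in>T. s w x1) = 2" using A1 x3 by simp
  have t1: "s w x1 = 1" if "w \<in> T" for w
    by (rule sum_all1[of T]) (use T1 cT that T_def pos01[OF ux1] in force)+
  have x3P: "x3 \<in> P u" using x3 by simp
  have A3: "(\<Sum>w\<in>P u - {x3}. s w x3) = 2"
    using A2_pos[OF ux3] a_eq[OF ux3] a2 sum.remove[OF finP x3P, of "\<lambda>w. s w x3"] by simp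
  have "(\<Sum>w\<in>P u - {x3}. s w x3) = s x1 x3 + (\<Sum>w\<in>T. s w x3)"
    unfolding T_def using x1 ne13 by (subst sum.remove[of _ x1]) (auto simp: Diff_insert2[symmetric] insert_commute)
  then have T3: "(\<Sum>w\<in>T. s w x3) = 2" using A3 s13 by simp
  have t3: "s w x3 = 1" if "w \<in> T" for w
    by (rule sum_all1[of T]) (use T3 cT that T_def pos01[OF ux3] in force)+
  define S where "S = insert u T"
  have uT: "u \<notin> T" unfolding T_def P_def by simp
  have "finite T" unfolding T_def by simp
  then have cS: "card S = 3" using cT uT unfolding S_def by (simp add: card_insert_disjoint)
  have SP: "S \<subseteq> P x1"
  proof
    fix w assume w: "w \<in> S"
    show "w \<in> P x1"
    proof (cases "w = u")
      case True
      have "s x1 u = 1" using ux1 sym[of x1 u] by simp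
      then show ?thesis using True u unfolding P_def by simp
    next
      case False
      then have "w \<in> T" using w S_def by simp
      then have "s w x1 = 1" "w \<in> V" using t1 T_def PV by auto
      then show ?thesis using sym[of x1 w] unfolding P_def by simp
    qed
  qed
  have SS: "(\<Sum>w\<in>S. s w x3) = 3"
  proof -
    have "(\<Sum>w\<in>S. s w x3) = (\<Sum>w\<in>S. 1)"
    proof (rule sum.cong)
      fix w assume "w \<in> S"
      then show "s w x3 = 1" using t3 ux3 unfolding S_def by auto
    qed simp
    then show ?thesis using cS by simp
  qed
  have "(\<Sum>w\<in>P x1. s w x3) = (\<Sum>w\<in>P x1 - S. s w x3) + (\<Sum>w\<in>S. s w x3)"
    by (rule sum.subset_diff) (use SP in auto)
  moreover have "(\<Sum>w\<in>P x1 - S. s w x3) \<ge> - int (card (P x1 - S))"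
  proof (rule sum_ge_card)
    fix w show "s w x3 \<ge> -1" using rng[of w x3] by auto
  qed simp
  moreover have "card (P x1 - S) = 1" using cards(1)[OF x1V] cS card_Diff_subset[OF finite_subset[OF SP finP] SP] by simp
  ultimately have "(\<Sum>w\<in>P x1. s w x3) \<ge> 2" using SS by simp
  moreover have "s (m x1) x3 \<le> 1" using rng[of "m x1" x3] by auto
  ultimately have "A2 V s x1 x3 \<ge> 1" using A2_form[OF x1V, of x3] by simp
  moreover have "A2 V s x1 x3 = c" using c_eq[OF x1V x3V ne13 s13] .
  ultimately show False using c0 by simp
qed

end


theorem mainTheorem3:
  fixes V :: "'a set" and s :: "'a \<Rightarrow> 'a \<Rightarrow> int"
    and n r :: nat and a b c :: int
  assumes "SRSG V s n r a b c"
    and "sg_connected V s"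
    and "\<not> sg_complete V s"
    and "regular V s 5"
    and "net_regular V s 3"
    and "class_C1 V s a b c \<or> class_C4 V s a b c \<or> class_C5 V s a b c"
    and "\<not> has_unbalanced_triangle V s"
  shows "(sg_isomorphic V s V10 S2_10 \<and> (n, r, a, b, c) = (10, 5, 0, 0, 1))
       \<or> (sg_isomorphic V s V10 S3_10 \<and> (n, r, a, b, c) = (10, 5, 3, 0, -2))"
proof -
  have sg: "signed_graph V s" and cV: "card V = n" and ned: "\<not> sg_edgeless V s"
    and dg: "\<forall>i\<in>V. A2 V s i i = int r"
    and Ha: "\<And>i j. i\<in>V \<Longrightarrow> j\<in>V \<Longrightarrow> i\<noteq>j \<Longrightarrow> s i j = 1 \<Longrightarrow> A2 V s i j = a"
    and Hb: "\<And>i j. i\<in>V \<Longrightarrow> j\<in>V \<Longrightarrow> i\<noteq>j \<Longrightarrow> s i j = -1 \<Longrightarrow> A2 V s i j = b"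
    and Hc: "\<And>i j. i\<in>V \<Longrightarrow> j\<in>V \<Longrightarrow> i\<noteq>j \<Longrightarrow> s i j = 0 \<Longrightarrow> A2 V s i j = c"
    using assms(1) unfolding SRSG_def by auto
  have ne: "V \<noteq> {}" using ned unfolding sg_edgeless_def by auto
  have deg: "card {w\<in>V. s v w \<noteq> 0} = 5" if "v \<in> V" for v
    using assms(4) that unfolding regular_def degree_def adj_def by auto
  have net: "int (card {w\<in>V. s v w = 1}) - int (card {w\<in>V. s v w = -1}) = 3" if "v \<in> V" for v
    using assms(5) that unfolding net_regular_def net_degree_def by auto
  interpret SRS V s n a b c
    by unfold_locales (use sg deg net assms(7) cV Ha Hb Hc ne in auto)
  obtain u where u: "u \<in> V" using ne by auto
  have r5: "r = 5" using dg A2_diag[OF u] u by auto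
  have b: "b = 0" by (rule b0)
  have ar: "0 \<le> a \<and> a \<le> 3" by (rule a_range)
  have ri: "4 * a + c * (int n - 6) = 4" by (rule rowid)
  have n7: "n \<ge> 7" using n7 assms(3) by simp
  have cls: "(a = 0 \<and> c \<noteq> 0) \<or> (a \<noteq> 0 \<and> c = 0) \<or> (a \<noteq> 0 \<and> c \<noteq> 0)"
    using assms(6) assms(3) b unfolding class_C1_def class_C4_def class_C5_def by auto
  consider "a = 0" | "a = 1" | "a = 2" | "a = 3" using ar by linarith
  then show ?thesis
  proof cases
    case 1
    then have "c \<noteq> 0" using cls by simp
    then show ?thesis using case0[OF 1] r5 b 1 by simp
  next
    case 2
    then have "c * (int n - 6) = 0" using ri by simp
    then have "c = 0" using n7 by simp
    then show ?thesis using case1[OF 2] by simp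
  next
    case 3
    then have k: "c * (int n - 6) = -4" using ri by simp
    have "c < 0"
    proof (rule ccontr)
      assume "\<not> c < 0"
      then have "c * (int n - 6) \<ge> 0" using n7 by simp
      then show False using k by simp
    qed
    then show ?thesis using case2[OF 3] by simp
  next
    case 4
    then have "c \<noteq> 0" using ri by auto
    then show ?thesis using case3[OF 4] r5 b 4 by simp
  qed
qed


end
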